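(* Let $G$ be a finite abelian group and let $f$ be an automorphism of the monoid $\mathcal{P}_{0}(G)$. If $H$ is a subgroup of $G$, then $f(H)$ is a subgroup of $G$ as well and $|f(H)|=|H|$.
   Context: For an additively written finite abelian group $G$, $\mathcal{P}_{0}(G)$ is the monoid of all subsets of $G$ containing $0$, with setwise addition $X+Y=\{x+y : x\in X, y\in Y\}$ and identity $\{0\}$. *)

theory Defs
  imports Main
begin

definition P0 :: "'a::ab_group_add set set" where
  "P0 = {X. 0 \<in> X}"

definition setadd :: "'a::ab_group_add set \<Rightarrow> 'a set \<Rightarrow> 'a set" where
  "setadd X Y = {x + y | x y. x \<in> X \<and> y \<in> Y}"

definition P0_automorphism :: "('a::ab_group_add set \<Rightarrow> 'a set) \<Rightarrow> bool" where
  "P0_automorphism f \<longleftrightarrow>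
     bij_betw f P0 P0 \<and>
     (\<forall>X\<in>P0. \<forall>Y\<in>P0. f (setadd X Y) = setadd (f X) (f Y)) \<and>
     f {0} = {0}"

definition add_subgroup :: "'a::ab_group_add set \<Rightarrow> bool" where
  "add_subgroup H \<longleftrightarrow> 0 \<in> H \<and> (\<forall>x\<in>H. \<forall>y\<in>H. x + y \<in> H) \<and> (\<forall>x\<in>H. - x \<in> H)"

end

theory Submission
  imports Defs
begin

lemma setadd_sub:
  assumes "0 \<in> Y" "0 \<in> K" "setadd Y K = K" shows "Y \<subseteq> K"
proof
  fix y assume "y \<in> Y"
  then have "y + 0 \<in> setadd Y K" using assms unfolding setadd_def by blast
  then show "y \<in> K" using assms by simp
qed

lemma setadd_eq:
  assumes "0 \<in> Y" "Y \<subseteq> K" "\<forall>x\<in>K. \<forall>y\<in>K. x + y \<in> K" shows "setadd Y K = K"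
proof
  show "setadd Y K \<subseteq> K" using assms unfolding setadd_def by blast
  show "K \<subseteq> setadd Y K"
  proof
    fix k assume "k \<in> K"
    then have "0 + k \<in> setadd Y K" using assms unfolding setadd_def by blast
    then show "k \<in> setadd Y K" by simp
  qed
qed

definition itp :: "'a::ab_group_add \<Rightarrow> nat \<Rightarrow> 'a" where
  "itp x n = ((\<lambda>y. y + x) ^^ n) 0"

lemma itp_add: "itp x (m + n) = itp x m + itp x n"
  by (induction n) (auto simp: itp_def add.assoc)

lemma itp_mem:
  assumes "0 \<in> X" "\<forall>a\<in>X. \<forall>b\<in>X. a + b \<in> X" "x \<in> X" shows "itp x n \<in> X"
  using assms by (induction n) (auto simp: itp_def)

lemma neg_mem:
  fixes X :: "'a::{finite,ab_group_add} set"
  assumes "0 \<in> X" "\<forall>a\<in>X. \<forall>b\<in>X. a + b \<in> X" "x \<in> X" shows "- x \<in> X"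
proof -
  have "\<not> inj (itp x)"
  proof
    assume "inj (itp x)"
    then have "infinite (range (itp x))"
      using finite_imageD infinite_UNIV_nat by blast
    then show False by simp
  qed
  then obtain i j where ij: "itp x i = itp x j" "i < j"
    unfolding inj_def by (metis linorder_neqE_nat)
  then have "itp x j = itp x i + itp x (j - i)" using itp_add[of x i "j - i"] by simp
  then have z: "itp x (j - i) = 0" using ij by simp
  obtain k where k: "j - i = Suc k" using ij by (metis Suc_diff_Suc)
  have "itp x k + x = 0" using z k by (simp add: itp_def)
  then have "- x = itp x k" using neg_eq_iff_add_eq_0[of x "itp x k"] by (simp add: add.commute)
  then show ?thesis using itp_mem[OF assms] by simp
qed

theorem lemma2p1:
  fixes f :: "'a::{finite, ab_group_add} set \<Rightarrow> 'a set"
    and H :: "'a set"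
  assumes "P0_automorphism f"
    and "add_subgroup H"
  shows "add_subgroup (f H) \<and> card (f H) = card H"
proof -
  have bij: "bij_betw f P0 P0" and hom: "\<And>X Y. X \<in> P0 \<Longrightarrow> Y \<in> P0 \<Longrightarrow> f (setadd X Y) = setadd (f X) (f Y)"
    using assms(1) unfolding P0_automorphism_def by auto
  have H0: "0 \<in> H" and Hc: "\<forall>x\<in>H. \<forall>y\<in>H. x + y \<in> H" using assms(2) unfolding add_subgroup_def by auto
  have HP: "H \<in> P0" using H0 by (simp add: P0_def)
  have HH: "setadd H H = H" using setadd_eq[OF H0 _ Hc] by simp
  have fHP: "f H \<in> P0" using bij HP by (auto simp: bij_betw_def)
  then have fH0: "0 \<in> f H" by (simp add: P0_def)
  have fHH: "setadd (f H) (f H) = f H" using hom[OF HP HP] HH by simp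
  have fHc: "\<forall>x\<in>f H. \<forall>y\<in>f H. x + y \<in> f H"
  proof (intro ballI)
    fix x y assume "x \<in> f H" "y \<in> f H"
    then have "x + y \<in> setadd (f H) (f H)" unfolding setadd_def by blast
    then show "x + y \<in> f H" using fHH by simp
  qed
  have sub: "add_subgroup (f H)"
    unfolding add_subgroup_def using fH0 fHc neg_mem[OF fH0 fHc] by blast
  define S where "S = (\<lambda>K::'a set. {X. 0 \<in> X \<and> X \<subseteq> K})"
  have cardS: "card (S K) = 2 ^ (card K - 1)" if "0 \<in> K" for K :: "'a set"
  proof -
    have "bij_betw (\<lambda>X. X - {0}) (S K) (Pow (K - {0}))"
      unfolding bij_betw_def inj_on_def S_def
    proof (intro conjI ballI impI)
      fix X Y assume "X \<in> {X. 0 \<in> X \<and> X \<subseteq> K}" "Y \<in> {X. 0 \<in> X \<and> X \<subseteq> K}" "X - {0} = Y - {0}"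
      then show "X = Y" by blast
    next
      show "(\<lambda>X. X - {0}) ` {X. 0 \<in> X \<and> X \<subseteq> K} = Pow (K - {0})"
      proof
        show "Pow (K - {0}) \<subseteq> (\<lambda>X. X - {0}) ` {X. 0 \<in> X \<and> X \<subseteq> K}"
        proof
          fix A assume "A \<in> Pow (K - {0})"
          then have "A = insert 0 A - {0}" "insert 0 A \<in> {X. 0 \<in> X \<and> X \<subseteq> K}" using that by auto
          then show "A \<in> (\<lambda>X. X - {0}) ` {X. 0 \<in> X \<and> X \<subseteq> K}" by blast
        qed
      qed auto
    qed
    then have "card (S K) = card (Pow (K - {0}))" by (rule bij_betw_same_card)
    also have "\<dots> = 2 ^ (card K - 1)" using that by (simp add: card_Pow)
    finally show ?thesis .
  qed
  have img: "f ` S H = S (f H)"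
  proof
    show "f ` S H \<subseteq> S (f H)"
    proof
      fix Y assume "Y \<in> f ` S H"
      then obtain X where X: "X \<in> S H" "Y = f X" by blast
      then have XP: "X \<in> P0" by (simp add: S_def P0_def)
      then have YP: "Y \<in> P0" using bij X by (auto simp: bij_betw_def)
      have "setadd X H = H" using X setadd_eq[OF _ _ Hc] by (simp add: S_def)
      then have "setadd Y (f H) = f H" using hom[OF XP HP] X by simp
      then have "Y \<subseteq> f H" using setadd_sub[OF _ fH0] YP by (simp add: P0_def)
      then show "Y \<in> S (f H)" using YP by (simp add: S_def P0_def)
    qed
    show "S (f H) \<subseteq> f ` S H"
    proof
      fix Y assume Y: "Y \<in> S (f H)"
      then have YP: "Y \<in> P0" by (simp add: S_def P0_def)
      then obtain X where X: "X \<in> P0" "Y = f X" using bij by (metis bij_betw_def imageE)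
      have "setadd Y (f H) = f H" using Y setadd_eq[OF _ _ fHc] by (simp add: S_def)
      then have "f (setadd X H) = f H" using hom[OF X(1) HP] X by simp
      moreover have "setadd X H \<in> P0"
      proof -
        have "0 + 0 \<in> setadd X H"
          using X(1) H0 unfolding P0_def setadd_def by blast
        then show ?thesis by (simp add: P0_def)
      qed
      ultimately have "setadd X H = H" using bij HP unfolding bij_betw_def inj_on_def by blast
      then have "X \<subseteq> H" using setadd_sub[OF _ H0] X by (simp add: P0_def)
      then show "Y \<in> f ` S H" using X by (auto simp: S_def P0_def)
    qed
  qed
  have "S H \<subseteq> P0" by (auto simp: S_def P0_def)
  then have "inj_on f (S H)" using bij_betw_imp_inj_on[OF bij] inj_on_subset by blast
  then have "card (S (f H)) = card (S H)" using img card_image by fastforce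
  then have "(2::nat) ^ (card (f H) - 1) = 2 ^ (card H - 1)" using cardS H0 fH0 by simp
  then have "card (f H) - 1 = card H - 1" by simp
  moreover have "card H > 0" "card (f H) > 0" using H0 fH0 by (auto simp: card_gt_0_iff)
  ultimately show ?thesis using sub by simp
qed

end
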